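(* Let $\vartheta\in\mathbb R^d$, $X\sim\mathcal N(\vartheta,I_d/\lambda)$ with $\lambda>0$, and $W\in\mathbb R^{K\times d}$ with all rows $W_i\ne0$. Then $$\big\|\mathbb E[g(WX)^{\otimes2}]-g(W\vartheta)^{\otimes2}\big\|_{op}\le C_K\,\psi_2(\vartheta,W,\lambda),$$ where $C_K$ depends only on $K$ and $$\psi_2(\vartheta,W,\lambda)=\max_{1\le i,j\le K}\Big[(|m_i^\vartheta|^3+\lambda^{-3/2}R_{ii}^{3/2})^{1/3}(|m_j^\vartheta|^3+\lambda^{-3/2}R_{jj}^{3/2})^{1/3}\Big(\bar F\big(\sqrt{\lambda/R_{ii}}\,|m_i^\vartheta|\big)+\bar F\big(\sqrt{\lambda/R_{jj}}\,|m_j^\vartheta|\big)\Big)^{1/3}+\frac{W_i\cdot W_j}\lambda\Big].$$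
   Context: $g(t)=\max(t,0)$ is ReLU applied entrywise; $W_i$ denotes the $i$-th row of $W$, $m_i^\vartheta=W_i\cdot\vartheta$, $R_{ij}=W_i\cdot W_j$; $\bar F(t)=\mathbb P(G>t)$ for $G\sim\mathcal N(0,1)$. *)

theory Defs
  imports "HOL-Probability.Probability"
begin

text \<open>ReLU, applied entrywise.\<close>
definition relu :: "real \<Rightarrow> real" where
  "relu t = max t 0"

text \<open>Gaussian N(theta, I_d / lambda) on R^d, realised as the product measure on
  functions indexed by {..<d} (independent coordinates with variance 1/lambda).\<close>
definition gauss_meas :: "nat \<Rightarrow> (nat \<Rightarrow> real) \<Rightarrow> real \<Rightarrow> (nat \<Rightarrow> real) measure" where
  "gauss_meas d \<theta> lam = PiM {..<d} (\<lambda>l. density lborel (normal_density (\<theta> l) (1 / sqrt lam)))"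

definition Fbar :: "real \<Rightarrow> real" where
  "Fbar t = measure (density lborel std_normal_density) {t<..}"

text \<open>W is a K x d matrix: rows indexed by 'k, columns by {..<d}.\<close>
definition mvec :: "nat \<Rightarrow> ('k \<Rightarrow> nat \<Rightarrow> real) \<Rightarrow> (nat \<Rightarrow> real) \<Rightarrow> 'k \<Rightarrow> real" where
  "mvec d W x i = (\<Sum>l<d. W i l * x l)"

definition Rmat :: "nat \<Rightarrow> ('k \<Rightarrow> nat \<Rightarrow> real) \<Rightarrow> 'k \<Rightarrow> 'k \<Rightarrow> real" where
  "Rmat d W i j = (\<Sum>l<d. W i l * W j l)"

definition second_moment ::
  "nat \<Rightarrow> (nat \<Rightarrow> real) \<Rightarrow> ('k::finite \<Rightarrow> nat \<Rightarrow> real) \<Rightarrow> real \<Rightarrow> real^'k^'k" where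
  "second_moment d \<theta> W lam = (\<chi> i j. LINT x | gauss_meas d \<theta> lam.
       relu (mvec d W x i) * relu (mvec d W x j))"

definition mean_outer :: "nat \<Rightarrow> (nat \<Rightarrow> real) \<Rightarrow> ('k::finite \<Rightarrow> nat \<Rightarrow> real) \<Rightarrow> real^'k^'k" where
  "mean_outer d \<theta> W = (\<chi> i j. relu (mvec d W \<theta> i) * relu (mvec d W \<theta> j))"

definition op_norm :: "real^'k^'k \<Rightarrow> real" where
  "op_norm M = onorm (\<lambda>v. M *v v)"

definition psi2 :: "nat \<Rightarrow> (nat \<Rightarrow> real) \<Rightarrow> ('k::finite \<Rightarrow> nat \<Rightarrow> real) \<Rightarrow> real \<Rightarrow> real" where
  "psi2 d \<theta> W lam = Max ((\<lambda>(i, j).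
      (\<bar>mvec d W \<theta> i\<bar> ^ 3 + lam powr (-3/2) * Rmat d W i i powr (3/2)) powr (1/3)
    * (\<bar>mvec d W \<theta> j\<bar> ^ 3 + lam powr (-3/2) * Rmat d W j j powr (3/2)) powr (1/3)
    * (Fbar (sqrt (lam / Rmat d W i i) * \<bar>mvec d W \<theta> i\<bar>)
       + Fbar (sqrt (lam / Rmat d W j j) * \<bar>mvec d W \<theta> j\<bar>)) powr (1/3)
    + Rmat d W i j / lam) ` UNIV)"

end

theory Submission
  imports Defs
begin


lemma gauss_prob: "lam > 0 \<Longrightarrow> prob_space (gauss_meas d \<theta> lam)"
  unfolding gauss_meas_def
  by (intro prob_space_PiM prob_space_normal_density) simp

lemma gauss_lin_distributed:
  assumes lam: "lam > 0" and ex: "\<exists>l<d. w l \<noteq> 0"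
  shows "distributed (gauss_meas d \<theta> lam) lborel (\<lambda>x. \<Sum>l<d. w l * x l)
           (normal_density (\<Sum>l<d. w l * \<theta> l) (sqrt ((\<Sum>l<d. w l * w l) / lam)))"
proof -
  define N where "N = (\<lambda>l. density lborel (normal_density (\<theta> l) (1 / sqrt lam)))"
  define M where "M = gauss_meas d \<theta> lam"
  have MN: "M = PiM {..<d} N" unfolding M_def N_def gauss_meas_def by simp
  interpret prob_space M unfolding M_def by (rule gauss_prob[OF lam])
  have Np: "\<And>l. prob_space (N l)" unfolding N_def by (rule prob_space_normal_density) (simp add: lam)
  have sN: "\<And>l. sets (N l) = sets borel" unfolding N_def by simp
  have spN: "\<And>l. space (N l) = UNIV" unfolding N_def by simp
  have ne: "{..<d} \<noteq> {}" using ex by auto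
  have rv: "random_variable (N l) (\<lambda>x. x l)" if "l \<in> {..<d}" for l
    using that unfolding MN by simp
  have distrc: "distr M (N l) (\<lambda>x. x l) = N l" if "l \<in> {..<d}" for l
    unfolding MN using that by (intro distr_PiM_component Np)
  have "distr M (PiM {..<d} N) (\<lambda>x. \<lambda>l\<in>{..<d}. x l) = distr M M (\<lambda>x. x)"
    by (intro distr_cong) (auto simp: MN space_PiM PiE_def extensional_def restrict_def fun_eq_iff)
  also have "\<dots> = M" by simp
  also have "\<dots> = PiM {..<d} (\<lambda>l. distr M (N l) (\<lambda>x. x l))"
    unfolding MN by (intro PiM_cong refl) (simp add: distrc[unfolded MN])
  finally have ind0: "indep_vars N (\<lambda>l x. x l) {..<d}"
    by (subst indep_vars_iff_distr_eq_PiM'[OF ne rv]) auto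
  have ind1: "indep_vars (\<lambda>_. borel) (\<lambda>l. (\<lambda>v. w l * v) \<circ> (\<lambda>x. x l)) {..<d}"
    by (rule indep_vars_compose[OF ind0]) (subst measurable_cong_sets[OF sN refl], simp)
  define L where "L = {l. l < d \<and> w l \<noteq> 0}"
  have L: "finite L" "L \<noteq> {}" "L \<subseteq> {..<d}" using ex unfolding L_def by auto
  have ind2: "indep_vars (\<lambda>_. borel) (\<lambda>l x. w l * x l) L"
    using indep_vars_subset[OF ind1 L(3)] by (simp add: o_def)
  have dc: "distributed M lborel (\<lambda>x. x l) (normal_density (\<theta> l) (1 / sqrt lam))" if "l < d" for l
  proof -
    have "distr M lborel (\<lambda>x. x l) = distr M (N l) (\<lambda>x. x l)"
      by (intro distr_cong) (auto simp: sN)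
    also have "\<dots> = N l" using distrc that by simp
    moreover have "(\<lambda>x. x l) \<in> borel_measurable M"
      using rv[of l] that by (simp add: measurable_cong_sets[OF refl sN])
    ultimately show ?thesis unfolding distributed_def N_def using that by simp
  qed
  have da: "distributed M lborel (\<lambda>x. w l * x l) (normal_density (w l * \<theta> l) (\<bar>w l\<bar> * (1 / sqrt lam)))"
    if "l \<in> L" for l
    using normal_density_affine[OF dc[of l], of "w l" 0] that lam by (auto simp: L_def)
  have "distributed M lborel (\<lambda>x. \<Sum>l\<in>L. w l * x l)
     (normal_density (\<Sum>l\<in>L. w l * \<theta> l) (sqrt (\<Sum>l\<in>L. (\<bar>w l\<bar> * (1 / sqrt lam))\<^sup>2)))"
    by (rule sum_indep_normal[OF L(1,2) ind2 _ da]) (use lam in \<open>auto simp: L_def\<close>)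
  moreover have "(\<lambda>x. \<Sum>l\<in>L. w l * x l) = (\<lambda>x. \<Sum>l<d. w l * x l)"
    by (intro ext sum.mono_neutral_left) (auto simp: L_def)
  moreover have "(\<Sum>l\<in>L. w l * \<theta> l) = (\<Sum>l<d. w l * \<theta> l)"
    by (intro sum.mono_neutral_left) (auto simp: L_def)
  moreover have "(\<Sum>l\<in>L. (\<bar>w l\<bar> * (1 / sqrt lam))\<^sup>2) = (\<Sum>l<d. w l * w l) / lam"
  proof -
    have "(\<Sum>l\<in>L. (\<bar>w l\<bar> * (1 / sqrt lam))\<^sup>2) = (\<Sum>l\<in>L. w l * w l / lam)"
      using lam by (intro sum.cong) (auto simp: power2_eq_square power_mult_distrib)
    also have "\<dots> = (\<Sum>l<d. w l * w l / lam)"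
      by (intro sum.mono_neutral_left) (auto simp: L_def)
    finally show ?thesis by (simp add: sum_divide_distrib)
  qed
  ultimately show ?thesis unfolding M_def by simp
qed



lemma normal_1d:
  fixes Y :: "'a \<Rightarrow> real"
  assumes P: "prob_space M" and D: "distributed M lborel Y (normal_density m s)" and s: "0 < s"
  shows "integrable M Y" "integral\<^sup>L M Y = m"
    "integrable M (\<lambda>x. (Y x - m)\<^sup>2)" "(\<integral>x. (Y x - m)\<^sup>2 \<partial>M) = s\<^sup>2"
proof -
  interpret prob_space M by (rule P)
  show "integrable M Y"
    using distributed_integrable[OF D, of "\<lambda>x. x"] integrable_normal_moment_nz_1[of s m] s by simp
  show "integral\<^sup>L M Y = m" by (rule normal_distributed_expectation[OF s D])
  show "integrable M (\<lambda>x. (Y x - m)\<^sup>2)"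
    using distributed_integrable[OF D, of "\<lambda>x. (x - m)\<^sup>2"] integrable_normal_moment[of s m 2] s by simp
  show "(\<integral>x. (Y x - m)\<^sup>2 \<partial>M) = s\<^sup>2"
    using normal_distributed_variance[OF s D] normal_distributed_expectation[OF s D] by simp
qed

lemma real_opt_bound:
  fixes E s P :: real
  assumes s: "0 < s" and P: "0 \<le> P" "P \<le> 1"
    and H: "\<And>c. 0 < c \<Longrightarrow> E \<le> s / (2 * c) + c * s * P / 2"
  shows "E \<le> s * P powr (1/3)"
proof (cases "P = 0")
  case True
  show ?thesis
  proof (rule ccontr)
    assume "\<not> ?thesis"
    then have E: "E > 0" using True by simp
    have "E \<le> s / (2 * (s / E))" using H[of "s / E"] True s E by simp
    also have "\<dots> = E / 2" using s E by (simp add: field_simps)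
    finally show False using E by simp
  qed
next
  case False
  then have Pp: "P > 0" using P by simp
  define q where "q = P powr (1/3)"
  have q: "q > 0" "q \<le> 1" using Pp P unfolding q_def using powr_mono2[of "1/3" P 1] by auto
  have q3: "P = q * q * q" unfolding q_def using Pp
    by (simp add: powr_add[symmetric])
  have "E \<le> s / (2 * (1/q)) + (1/q) * s * P / 2" using H[of "1/q"] q by simp
  also have "\<dots> = s * q / 2 + s * q * q / 2" using q q3 by (simp add: field_simps)
  also have "\<dots> \<le> s * q / 2 + s * q / 2"
  proof -
    have "q * q \<le> q" using q by (simp add: mult_left_le)
    then have "s * q * q \<le> s * q" using s mult_left_mono[of "q*q" q s] by (simp add: mult.assoc)
    then show ?thesis by linarith
  qed
  finally show ?thesis unfolding q_def by simp
qed

lemma relu_1d: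
  fixes Y :: "'a \<Rightarrow> real"
  assumes P: "prob_space M" and D: "distributed M lborel Y (normal_density m s)" and s: "0 < s"
  shows "integrable M (\<lambda>x. relu (Y x) - relu m)"
    "\<bar>\<integral>x. relu (Y x) - relu m \<partial>M\<bar> \<le> s * Fbar (\<bar>m\<bar> / s) powr (1/3)"
proof -
  interpret prob_space M by (rule P)
  note N = normal_1d[OF P D s]
  have Ym[measurable]: "Y \<in> borel_measurable M"
    using distributed_measurable[OF D] by simp
  have rm[measurable]: "relu \<in> borel_measurable borel" unfolding relu_def by measurable
  have bd: "\<bar>relu a - relu b\<bar> \<le> \<bar>a - b\<bar>" for a b unfolding relu_def by auto
  have iYm: "integrable M (\<lambda>x. Y x - m)" using N(1) by simp
  show iD: "integrable M (\<lambda>x. relu (Y x) - relu m)"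
    by (rule Bochner_Integration.integrable_bound[OF iYm]) (auto simp: bd)
  define A where "A = {x\<in>space M. if m > 0 then Y x < 0 else Y x > 0}"
  have Aev: "A \<in> events" unfolding A_def by measurable
  define G where "G = (\<lambda>x. (if m > 0 then - 1 / s else 1 / s) * (Y x - m))"
  have DG: "distributed M lborel G std_normal_density"
  proof -
    have "distributed M lborel (\<lambda>x. (if m > 0 then m / s else - m / s) + (if m > 0 then - 1 / s else 1 / s) * Y x)
       (normal_density ((if m > 0 then m / s else - m / s) + (if m > 0 then - 1 / s else 1 / s) * m)
           (\<bar>if m > 0 then - 1 / s else 1 / s\<bar> * s))"
      by (rule normal_density_affine[OF D s]) (use s in auto)
    moreover have "(\<lambda>x. (if m > 0 then m / s else - m / s) + (if m > 0 then - 1 / s else 1 / s) * Y x) = G"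
      unfolding G_def using s by (auto simp: fun_eq_iff field_simps)
    ultimately show ?thesis using s by auto
  qed
  have GA: "A = G -` {\<bar>m\<bar> / s<..} \<inter> space M"
    unfolding A_def G_def using s by (auto simp: field_simps)
  have PA: "prob A = Fbar (\<bar>m\<bar> / s)"
  proof -
    have "Fbar (\<bar>m\<bar> / s) = measure (distr M lborel G) {\<bar>m\<bar> / s<..}"
      unfolding Fbar_def using distributed_distr_eq_density[OF DG] by simp
    also have "\<dots> = prob A"
      unfolding GA using distributed_measurable[OF DG] by (subst measure_distr) auto
    finally show ?thesis by simp
  qed
  define h where "h = (\<lambda>x. relu (Y x) - relu m - (if m > 0 then Y x - m else 0))"
  have h0: "0 \<le> h x" for x unfolding h_def relu_def by auto
  have hA: "h x \<le> \<bar>Y x - m\<bar> * indicator A x" if "x \<in> space M" for x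
    using that unfolding h_def relu_def A_def by (auto simp: indicator_def)
  have ih: "integrable M h" unfolding h_def
    using iD N(1) by (cases "m > 0") (auto intro!: integrable_diff)
  have Eh: "(\<integral>x. relu (Y x) - relu m \<partial>M) = integral\<^sup>L M h"
  proof -
    have "integral\<^sup>L M h = (\<integral>x. relu (Y x) - relu m \<partial>M) - (\<integral>x. (if m > 0 then Y x - m else 0) \<partial>M)"
      unfolding h_def using iD N(1) by (cases "m > 0") (auto intro!: integral_diff)
    moreover have "(\<integral>x. (if m > 0 then Y x - m else 0) \<partial>M) = 0"
      using N(1,2) by (cases "m > 0") (auto simp: prob_space)
    ultimately show ?thesis by simp
  qed
  have "integral\<^sup>L M h \<le> s * prob A powr (1/3)"
  proof (rule real_opt_bound[OF s])
    fix c :: real assume c: "0 < c"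
    have pw: "\<bar>Y x - m\<bar> * indicator A x \<le> (Y x - m)\<^sup>2 / (2 * s * c) + (c * s / 2) * indicator A x" for x
    proof -
      have "0 \<le> (\<bar>Y x - m\<bar> - c * s * indicator A x)\<^sup>2" by simp
      then have "2 * (c * s) * (\<bar>Y x - m\<bar> * indicator A x) \<le> (Y x - m)\<^sup>2 + (c * s)\<^sup>2 * indicator A x"
        by (auto simp: indicator_def power2_eq_square algebra_simps)
      then show ?thesis using c s by (simp add: field_simps power2_eq_square)
    qed
    have i2a: "integrable M (\<lambda>x. (Y x - m)\<^sup>2 / (2 * s * c))" using N(3) by simp
    have i2b: "integrable M (\<lambda>x. (c * s / 2) * indicator A x)"
        using Aev by (intro integrable_mult_right integrable_real_indicator) (auto simp: emeasure_eq_measure)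
    have i2: "integrable M (\<lambda>x. (Y x - m)\<^sup>2 / (2 * s * c) + (c * s / 2) * indicator A x)"
      using i2a i2b by (rule Bochner_Integration.integrable_add)
    have "integral\<^sup>L M h \<le> (\<integral>x. (Y x - m)\<^sup>2 / (2 * s * c) + (c * s / 2) * indicator A x \<partial>M)"
      by (rule integral_mono[OF ih i2]) (use hA pw order_trans in blast)
    also have "\<dots> = s\<^sup>2 / (2 * s * c) + (c * s / 2) * prob A"
      using N(4) Aev by (subst Bochner_Integration.integral_add[OF i2a i2b]) (auto)
    also have "\<dots> = s / (2 * c) + c * s * prob A / 2" using s by (simp add: power2_eq_square)
    finally show "integral\<^sup>L M h \<le> s / (2 * c) + c * s * prob A / 2" .
  qed auto
  moreover have "0 \<le> integral\<^sup>L M h" using h0 by simp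
  ultimately show "\<bar>\<integral>x. relu (Y x) - relu m \<partial>M\<bar> \<le> s * Fbar (\<bar>m\<bar> / s) powr (1/3)"
    using Eh PA by simp
qed



lemma cube_root_ge:
  fixes x z :: real
  assumes "0 \<le> x" "x ^ 3 \<le> z"
  shows "x \<le> z powr (1/3)"
proof (cases "x = 0")
  case True then show ?thesis by simp
next
  case False
  then have xp: "x > 0" using assms by simp
  then have zp: "z > 0" using assms(2) by (smt (verit) zero_less_power)
  show ?thesis
  proof (rule ccontr)
    assume "\<not> ?thesis"
    then have lt: "z powr (1/3) < x" by simp
    have "(z powr (1/3)) ^ 3 < x ^ 3"
      using lt by (intro power_strict_mono) auto
    moreover have "(z powr (1/3)) ^ 3 = z"
      using zp by (simp add: powr_realpow[symmetric] powr_powr)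
    ultimately show False using assms(2) by simp
  qed
qed

lemma psi_bound:
  fixes si sj Pi Pj mi mj psi r :: real
  assumes "0 < si" "0 < sj" "0 \<le> Pi" "0 \<le> Pj" "si\<^sup>2 \<le> psi" "sj\<^sup>2 \<le> psi"
    "(\<bar>mi\<bar> ^ 3 + si ^ 3) powr (1/3) * (\<bar>mj\<bar> ^ 3 + sj ^ 3) powr (1/3) * (Pi + Pj) powr (1/3) + r \<le> psi"
    "\<bar>r\<bar> \<le> (si\<^sup>2 + sj\<^sup>2) / 2"
  shows "(si\<^sup>2 + sj\<^sup>2) / 2 + \<bar>mi\<bar> * (sj * Pj powr (1/3)) + \<bar>mj\<bar> * (si * Pi powr (1/3)) \<le> 5 * psi"
proof -
  define ai where "ai = (\<bar>mi\<bar> ^ 3 + si ^ 3) powr (1/3)"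
  define aj where "aj = (\<bar>mj\<bar> ^ 3 + sj ^ 3) powr (1/3)"
  define Q where "Q = (Pi + Pj) powr (1/3)"
  have ai: "\<bar>mi\<bar> \<le> ai" "si \<le> ai" unfolding ai_def using assms(1)
    by (auto intro!: cube_root_ge)
  have aj: "\<bar>mj\<bar> \<le> aj" "sj \<le> aj" unfolding aj_def using assms(2)
    by (auto intro!: cube_root_ge)
  have Qi: "Pi powr (1/3) \<le> Q" unfolding Q_def using assms(3,4) by (intro powr_mono2) auto
  have Qj: "Pj powr (1/3) \<le> Q" unfolding Q_def using assms(3,4) by (intro powr_mono2) auto
  have P0: "0 \<le> Pi powr (1/3)" "0 \<le> Pj powr (1/3)" by auto
  have 1: "\<bar>mi\<bar> * (sj * Pj powr (1/3)) \<le> ai * (aj * Q)"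
    using ai aj Qj P0 assms(1,2) by (intro mult_mono) auto
  have 2: "\<bar>mj\<bar> * (si * Pi powr (1/3)) \<le> aj * (ai * Q)"
    using ai aj Qi P0 assms(1,2) by (intro mult_mono) auto
  have 3: "ai * aj * Q + r \<le> psi" using assms(7) unfolding ai_def aj_def Q_def .
  have 4: "- r \<le> (si\<^sup>2 + sj\<^sup>2) / 2" using assms(8) by linarith
  have h4b: "(si\<^sup>2 + sj\<^sup>2) / 2 \<le> psi" using assms(5,6) by (simp add: field_simps)
  have 5: "ai * aj * Q \<le> 2 * psi" using 3 4 h4b by linarith
  have 6: "ai * (aj * Q) = ai * aj * Q" "aj * (ai * Q) = ai * aj * Q" by (simp_all add: ac_simps)
  show ?thesis using 1 2 5 6 h4b by linarith
qed

lemma op_norm_le: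
  fixes B :: "real^'k^'k"
  assumes "\<And>i j. \<bar>B$i$j\<bar> \<le> b"
  shows "op_norm B \<le> real (card (UNIV::'k set)) ^ 2 * b"
  unfolding op_norm_def
proof (rule onorm_le)
  fix v :: "real^'k"
  have "norm (B *v v) \<le> (\<Sum>i\<in>UNIV. \<bar>(B *v v)$i\<bar>)" by (rule norm_le_l1_cart)
  also have "\<dots> \<le> (\<Sum>i\<in>(UNIV::'k set). \<Sum>j\<in>(UNIV::'k set). b * norm v)"
  proof (rule sum_mono)
    fix i :: 'k
    have "\<bar>(B *v v)$i\<bar> = \<bar>\<Sum>j\<in>UNIV. B$i$j * v$j\<bar>" by (simp add: matrix_vector_mult_def)
    also have "\<dots> \<le> (\<Sum>j\<in>UNIV. \<bar>B$i$j * v$j\<bar>)" by (rule sum_abs)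
    also have "\<dots> \<le> (\<Sum>j\<in>(UNIV::'k set). b * norm v)"
      by (rule sum_mono) (auto simp: abs_mult intro!: mult_mono assms component_le_norm_cart order_trans[OF abs_ge_zero assms])
    finally show "\<bar>(B *v v)$i\<bar> \<le> (\<Sum>j\<in>(UNIV::'k set). b * norm v)" .
  qed
  also have "\<dots> = real (card (UNIV::'k set)) ^ 2 * b * norm v" by (simp add: power2_eq_square)
  finally show "norm (B *v v) \<le> real (card (UNIV::'k set)) ^ 2 * b * norm v" .
qed



lemma relu_prod_bd: "\<bar>(relu a - relu b) * (relu c - relu e)\<bar> \<le> ((a - b)\<^sup>2 + (c - e)\<^sup>2) / 2"
proof -
  have 1: "\<bar>relu a - relu b\<bar> \<le> \<bar>a - b\<bar>" "\<bar>relu c - relu e\<bar> \<le> \<bar>c - e\<bar>" unfolding relu_def by auto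
  have "\<bar>(relu a - relu b) * (relu c - relu e)\<bar> \<le> \<bar>a - b\<bar> * \<bar>c - e\<bar>"
    unfolding abs_mult using 1 by (intro mult_mono) auto
  also have "\<dots> \<le> ((a - b)\<^sup>2 + (c - e)\<^sup>2) / 2"
  proof -
    have "0 \<le> (\<bar>a - b\<bar> - \<bar>c - e\<bar>)\<^sup>2" by simp
    then show ?thesis by (simp add: power2_eq_square algebra_simps field_simps)
  qed
  finally show ?thesis .
qed

lemma entry_bound:
  fixes Yi Yj :: "'a \<Rightarrow> real"
  assumes P: "prob_space M"
    and Di: "distributed M lborel Yi (normal_density mi si)" and si: "0 < si"
    and Dj: "distributed M lborel Yj (normal_density mj sj)" and sj: "0 < sj"
  shows "\<bar>(\<integral>x. relu (Yi x) * relu (Yj x) \<partial>M) - relu mi * relu mj\<bar>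
     \<le> (si\<^sup>2 + sj\<^sup>2) / 2 + \<bar>mi\<bar> * (sj * Fbar (\<bar>mj\<bar> / sj) powr (1/3))
        + \<bar>mj\<bar> * (si * Fbar (\<bar>mi\<bar> / si) powr (1/3))"
proof -
  interpret prob_space M by (rule P)
  note Ni = normal_1d[OF P Di si] and Nj = normal_1d[OF P Dj sj]
  note Ri = relu_1d[OF P Di si] and Rj = relu_1d[OF P Dj sj]
  have [measurable]: "Yi \<in> borel_measurable M" "Yj \<in> borel_measurable M"
    using distributed_measurable[OF Di] distributed_measurable[OF Dj] by simp_all
  have rm[measurable]: "relu \<in> borel_measurable borel" unfolding relu_def by measurable
  define f where "f = (\<lambda>x. ((Yi x - mi)\<^sup>2 + (Yj x - mj)\<^sup>2) / 2)"
  have fi: "integrable M f" unfolding f_def using Ni(3) Nj(3)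
    by (intro integrable_divide_zero Bochner_Integration.integrable_add) auto
  have fE: "integral\<^sup>L M f = (si\<^sup>2 + sj\<^sup>2) / 2" unfolding f_def using Ni(3,4) Nj(3,4)
    by (simp add: Bochner_Integration.integral_add)
  define g where "g = (\<lambda>x. (relu (Yi x) - relu mi) * (relu (Yj x) - relu mj))"
  have gbd: "\<bar>g x\<bar> \<le> f x" for x unfolding g_def f_def by (rule relu_prod_bd)
  have gbd': "norm (g x) \<le> norm (f x)" for x
    using gbd[of x] abs_ge_self[of "f x"] by simp
  have gm: "g \<in> borel_measurable M" unfolding g_def by measurable
  have gi: "integrable M g"
    by (rule Bochner_Integration.integrable_bound[OF fi gm]) (use gbd' in simp)
  have gE: "\<bar>integral\<^sup>L M g\<bar> \<le> (si\<^sup>2 + sj\<^sup>2) / 2"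
  proof -
    have "integral\<^sup>L M g \<le> integral\<^sup>L M f"
      by (rule integral_mono[OF gi fi]) (use gbd abs_le_D1 in blast)
    moreover have "integral\<^sup>L M (\<lambda>x. - f x) \<le> integral\<^sup>L M g"
    proof (rule integral_mono)
      show "integrable M (\<lambda>x. - f x)" using fi by simp
      show "integrable M g" by (rule gi)
      fix x show "- f x \<le> g x" using gbd[of x] by linarith
    qed
    moreover have "integral\<^sup>L M (\<lambda>x. - f x) = - integral\<^sup>L M f" by simp
    ultimately show ?thesis using fE unfolding abs_le_iff by argo
  qed
  have dec: "relu (Yi x) * relu (Yj x) = g x + relu mi * (relu (Yj x) - relu mj)
      + relu mj * (relu (Yi x) - relu mi) + relu mi * relu mj" for x
    unfolding g_def by (simp add: algebra_simps)
  have "(\<integral>x. relu (Yi x) * relu (Yj x) \<partial>M) = integral\<^sup>L M g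
      + relu mi * (\<integral>x. relu (Yj x) - relu mj \<partial>M) + relu mj * (\<integral>x. relu (Yi x) - relu mi \<partial>M)
      + relu mi * relu mj"
    unfolding dec using gi Ri(1) Rj(1)
    by (simp add: Bochner_Integration.integral_add prob_space)
  moreover have "\<bar>relu mi * (\<integral>x. relu (Yj x) - relu mj \<partial>M)\<bar> \<le> \<bar>mi\<bar> * (sj * Fbar (\<bar>mj\<bar> / sj) powr (1/3))"
    unfolding abs_mult using Rj(2) by (intro mult_mono) (auto simp: relu_def)
  moreover have "\<bar>relu mj * (\<integral>x. relu (Yi x) - relu mi \<partial>M)\<bar> \<le> \<bar>mj\<bar> * (si * Fbar (\<bar>mi\<bar> / si) powr (1/3))"
    unfolding abs_mult using Ri(2) by (intro mult_mono) (auto simp: relu_def)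
  ultimately show ?thesis using gE by argo
qed



lemma pow32_conv:
  fixes R lam :: real
  assumes "0 < R" "0 < lam"
  shows "lam powr (-3/2) * R powr (3/2) = sqrt (R / lam) ^ 3"
proof -
  have "sqrt (R / lam) ^ 3 = ((R / lam) powr (1/2)) ^ 3"
    using assms by (simp add: powr_half_sqrt)
  also have "\<dots> = ((R / lam) powr (1/2)) powr (real 3)"
    using assms by (subst powr_realpow) auto
  also have "\<dots> = (R / lam) powr (3/2)" by (simp add: powr_powr)
  also have "\<dots> = R powr (3/2) / lam powr (3/2)" using assms by (simp add: powr_divide)
  also have "\<dots> = lam powr (-3/2) * R powr (3/2)" using assms by (simp add: powr_minus_divide)
  finally show ?thesis by simp
qed

lemma sqrt_conv:
  fixes R lam m :: real
  assumes "0 < R" "0 < lam"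
  shows "sqrt (lam / R) * m = m / sqrt (R / lam)"
  using assms by (simp add: real_sqrt_divide field_simps)

lemma Rmat_bd: "\<bar>Rmat d W i j\<bar> \<le> (Rmat d W i i + Rmat d W j j) / 2"
proof -
  have "\<bar>Rmat d W i j\<bar> \<le> (\<Sum>l<d. \<bar>W i l * W j l\<bar>)" unfolding Rmat_def by (rule sum_abs)
  also have "\<dots> \<le> (\<Sum>l<d. (W i l * W i l + W j l * W j l) / 2)"
  proof (rule sum_mono)
    fix l
    have "2 * \<bar>W i l\<bar> * \<bar>W j l\<bar> \<le> \<bar>W i l\<bar>\<^sup>2 + \<bar>W j l\<bar>\<^sup>2" by (rule sum_squares_bound)
    then show "\<bar>W i l * W j l\<bar> \<le> (W i l * W i l + W j l * W j l) / 2"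
      by (simp add: abs_mult power2_eq_square)
  qed
  also have "\<dots> = (\<Sum>l<d. W i l * W i l + W j l * W j l) / 2"
    by (rule sum_divide_distrib[symmetric])
  also have "\<dots> = (Rmat d W i i + Rmat d W j j) / 2"
    unfolding Rmat_def by (simp only: sum.distrib)
  finally show ?thesis .
qed

lemma Rmat_pos:
  assumes "\<exists>l<d. W i l \<noteq> 0"
  shows "0 < Rmat d W i i"
proof -
  obtain l where l: "l < d" "W i l \<noteq> 0" using assms by auto
  have "0 < W i l * W i l" using l by (auto simp: zero_less_mult_iff)
  also have "\<dots> \<le> Rmat d W i i" unfolding Rmat_def
    by (rule member_le_sum) (use l in auto)
  finally show ?thesis .
qed

theorem lemma4p1:
  "\<exists>C::real. \<forall>(d::nat) (\<theta>::nat \<Rightarrow> real) (W::'k::finite \<Rightarrow> nat \<Rightarrow> real) (lam::real).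
     lam > 0 \<longrightarrow> (\<forall>i. \<exists>l<d. W i l \<noteq> 0) \<longrightarrow>
     op_norm (second_moment d \<theta> W lam - mean_outer d \<theta> W) \<le> C * psi2 d \<theta> W lam"
proof (intro exI allI impI)
  fix d :: nat and \<theta> :: "nat \<Rightarrow> real" and W :: "'k::finite \<Rightarrow> nat \<Rightarrow> real" and lam :: real
  assume lam: "lam > 0" and rows: "\<forall>i. \<exists>l<d. W i l \<noteq> 0"
  define M where "M = gauss_meas d \<theta> lam"
  have P: "prob_space M" unfolding M_def by (rule gauss_prob[OF lam])
  define m where "m = mvec d W \<theta>"
  define R where "R = Rmat d W"
  define s where "s = (\<lambda>i. sqrt (R i i / lam))"
  define F where "F = (\<lambda>i. Fbar (\<bar>m i\<bar> / s i))"
  define psi where "psi = psi2 d \<theta> W lam"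
  have Rp: "0 < R i i" for i unfolding R_def using rows by (intro Rmat_pos) simp
  have sp: "0 < s i" for i unfolding s_def using Rp[of i] lam by simp
  have s2: "(s i)\<^sup>2 = R i i / lam" for i unfolding s_def using Rp[of i] lam by simp
  have D: "distributed M lborel (\<lambda>x. mvec d W x i) (normal_density (m i) (s i))" for i
    using gauss_lin_distributed[OF lam, where w="W i" and d=d and \<theta>=\<theta>] rows
    unfolding M_def m_def s_def R_def mvec_def Rmat_def by simp
  have F0: "0 \<le> F i" for i unfolding F_def Fbar_def by simp
  have T: "(\<bar>m i\<bar> ^ 3 + (s i) ^ 3) powr (1/3) * (\<bar>m j\<bar> ^ 3 + (s j) ^ 3) powr (1/3) * (F i + F j) powr (1/3)
      + R i j / lam \<le> psi" for i j
  proof -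
    have "(case (i, j) of (i, j) \<Rightarrow>
      (\<bar>mvec d W \<theta> i\<bar> ^ 3 + lam powr (-3/2) * Rmat d W i i powr (3/2)) powr (1/3)
    * (\<bar>mvec d W \<theta> j\<bar> ^ 3 + lam powr (-3/2) * Rmat d W j j powr (3/2)) powr (1/3)
    * (Fbar (sqrt (lam / Rmat d W i i) * \<bar>mvec d W \<theta> i\<bar>)
       + Fbar (sqrt (lam / Rmat d W j j) * \<bar>mvec d W \<theta> j\<bar>)) powr (1/3)
    + Rmat d W i j / lam) \<le> psi"
      unfolding psi_def psi2_def by (rule Max_ge) auto
    then show ?thesis
      using pow32_conv[OF Rp[of i] lam] pow32_conv[OF Rp[of j] lam]
        sqrt_conv[OF Rp[of i] lam] sqrt_conv[OF Rp[of j] lam]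
      unfolding F_def s_def m_def R_def by simp
  qed
  have Tii: "(s i)\<^sup>2 \<le> psi" for i
  proof -
    have "0 \<le> (\<bar>m i\<bar> ^ 3 + (s i) ^ 3) powr (1/3) * (\<bar>m i\<bar> ^ 3 + (s i) ^ 3) powr (1/3) * (F i + F i) powr (1/3)"
      by simp
    then show ?thesis using T[of i i] s2[of i] by linarith
  qed
  have rb: "\<bar>R i j / lam\<bar> \<le> ((s i)\<^sup>2 + (s j)\<^sup>2) / 2" for i j
  proof -
    have "\<bar>R i j / lam\<bar> = \<bar>R i j\<bar> / lam" using lam by simp
    also have "\<dots> \<le> ((R i i + R j j) / 2) / lam"
      using Rmat_bd[of d W i j] lam unfolding R_def by (intro divide_right_mono) auto
    also have "\<dots> = ((s i)\<^sup>2 + (s j)\<^sup>2) / 2" using s2 by (simp add: add_divide_distrib)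
    finally show ?thesis .
  qed
  have entry: "\<bar>(second_moment d \<theta> W lam - mean_outer d \<theta> W) $ i $ j\<bar> \<le> 5 * psi" for i j
  proof -
    have "\<bar>(second_moment d \<theta> W lam - mean_outer d \<theta> W) $ i $ j\<bar>
      = \<bar>(\<integral>x. relu (mvec d W x i) * relu (mvec d W x j) \<partial>M) - relu (m i) * relu (m j)\<bar>"
      unfolding second_moment_def mean_outer_def M_def m_def by simp
    also have "\<dots> \<le> ((s i)\<^sup>2 + (s j)\<^sup>2) / 2 + \<bar>m i\<bar> * (s j * F j powr (1/3)) + \<bar>m j\<bar> * (s i * F i powr (1/3))"
      unfolding F_def by (rule entry_bound[OF P D sp D sp])
    also have "\<dots> \<le> 5 * psi"
      by (rule psi_bound[OF sp sp F0 F0 Tii Tii T rb])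
    finally show ?thesis .
  qed
  have "op_norm (second_moment d \<theta> W lam - mean_outer d \<theta> W) \<le> real (card (UNIV::'k set)) ^ 2 * (5 * psi)"
    by (rule op_norm_le) (rule entry)
  then show "op_norm (second_moment d \<theta> W lam - mean_outer d \<theta> W)
      \<le> (5 * real (card (UNIV::'k set)) ^ 2) * psi2 d \<theta> W lam"
    unfolding psi_def by (simp add: ac_simps)
qed

end
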